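(* Let $0<p_{\mathrm{gen}}<1$, $0<p_{\mathrm{swap}}\le1$. Let $T_0$ be either geometric on $\{1,2,\dots\}$ with parameter $p_{\mathrm{gen}}$ or exponential with $\Pr(T_0>x)=e^{-p_{\mathrm{gen}}x}$. For $n\ge0$ let $M_n=\max(T_n^{(1)},T_n^{(2)})$ (i.i.d. copies of $T_n$) and $T_{n+1}=\sum_{k=1}^{K}M_n^{(k)}$ with $M_n^{(k)}$ i.i.d. copies of $M_n$ and $K$ independent, geometric on $\{1,2,\dots\}$ with parameter $p_{\mathrm{swap}}$. Define $R_0=\max(T_0^{(1)},T_0^{(2)})$ and $R_{n+1}=\sum_{j=1}^{N}R_n^{(j)}$ with $R_n^{(j)}$ i.i.d. copies of $R_n$ and $N=\max(K^{(1)},K^{(2)})$ independent, $K^{(1)},K^{(2)}$ i.i.d. geometric on $\{1,2,\dots\}$ with parameter $p_{\mathrm{swap}}$. Then $M_n\ge_{\mathrm{st}}R_n$ for all $n\ge0$.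
   Context: A geometric random variable on $\{1,2,\dots\}$ with parameter $q$ satisfies $\Pr(K=k)=q(1-q)^{k-1}$. For random variables $X,Y$ with domains $D_X,D_Y\subseteq\mathbb{R}$, $X\ge_{\mathrm{st}}Y$ means $\Pr(X>z)\ge\Pr(Y>z)$ for all $z\in D_X\cap D_Y$. *)

theory Defs
  imports "HOL-Probability.Probability"
begin

text \<open>Laws (distributions) are represented as measures.
  Geometric law on {1,2,...} with parameter q: Pr(K=k) = q(1-q)^(k-1).\<close>
definition geom1 :: "real \<Rightarrow> nat measure" where
  "geom1 q = measure_pmf (map_pmf Suc (geometric_pmf q))"

definition geomT0 :: "real \<Rightarrow> real measure" where
  "geomT0 p = distr (geom1 p) borel real"

definition expT0 :: "real \<Rightarrow> real measure" where
  "expT0 p = density lborel (exponential_density p)"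

definition max2 :: "('a::linorder) measure \<Rightarrow> 'a measure" where
  "max2 mu = distr (mu \<Otimes>\<^sub>M mu) mu (\<lambda>(x, y). max x y)"

definition rsum :: "nat measure \<Rightarrow> real measure \<Rightarrow> real measure" where
  "rsum Kd mu = distr (Kd \<Otimes>\<^sub>M (\<Pi>\<^sub>M i\<in>(UNIV::nat set). mu)) borel
                  (\<lambda>(k, xs). \<Sum>i<k. xs i)"

primrec Tlaw :: "real \<Rightarrow> real measure \<Rightarrow> nat \<Rightarrow> real measure" where
  "Tlaw ps T0 0 = T0"
| "Tlaw ps T0 (Suc n) = rsum (geom1 ps) (max2 (Tlaw ps T0 n))"

definition Mlaw :: "real \<Rightarrow> real measure \<Rightarrow> nat \<Rightarrow> real measure" where
  "Mlaw ps T0 n = max2 (Tlaw ps T0 n)"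

primrec Rlaw :: "real \<Rightarrow> real measure \<Rightarrow> nat \<Rightarrow> real measure" where
  "Rlaw ps T0 0 = max2 T0"
| "Rlaw ps T0 (Suc n) = rsum (max2 (geom1 ps)) (Rlaw ps T0 n)"

end

theory Submission
  imports Defs
begin

definition C :: "real measure \<Rightarrow> real \<Rightarrow> ennreal" where
  "C mu z = emeasure mu {x. x \<le> z}"

definition psi :: "real measure \<Rightarrow> nat \<Rightarrow> real \<Rightarrow> ennreal" where
  "psi mu k z = emeasure (PiM {..<k} (\<lambda>_. mu))
     {xs \<in> space (PiM {..<k} (\<lambda>_. mu)). (\<Sum>i<k. xs i) \<le> z}"

lemma le_borel: "{x::real. x \<le> c} \<in> sets borel"
  by (metis atMost_borel atMost_def)

lemma sets_le:
  assumes "f \<in> borel_measurable M" shows "{x\<in>space M. f x \<le> (z::real)} \<in> sets M"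
  using assms by measurable

lemma meas_sum_PiM:
  assumes "sets mu = sets (borel::real measure)" "J \<subseteq> I"
  shows "(\<lambda>xs. \<Sum>i\<in>J. xs i) \<in> borel_measurable (PiM I (\<lambda>_. mu))"
proof (rule borel_measurable_sum)
  fix i assume "i \<in> J"
  then have "(\<lambda>xs. xs i) \<in> measurable (PiM I (\<lambda>_. mu)) mu"
    using assms by (intro measurable_component_singleton) auto
  then show "(\<lambda>xs. xs i) \<in> borel_measurable (PiM I (\<lambda>_. mu))"
    using assms measurable_cong_sets by blast
qed

lemma swap:
  assumes P: "prob_space P" and nu: "prob_space (nu::real measure)" "sets nu = sets borel"
    and g[measurable]: "g \<in> borel_measurable P"
  shows "(\<integral>\<^sup>+x. emeasure nu {y. y \<le> z - g x} \<partial>P) = (\<integral>\<^sup>+y. emeasure P {x\<in>space P. g x \<le> z - y} \<partial>nu)"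
proof -
  interpret P: prob_space P by fact
  interpret N: prob_space nu by fact
  interpret pair_sigma_finite P nu by unfold_locales
  have sp: "space nu = UNIV" using nu(2) sets_eq_imp_space_eq by fastforce
  define f where "f x y = (indicator {p \<in> space (P \<Otimes>\<^sub>M nu). g (fst p) + snd p \<le> z} (x,y) :: ennreal)" for x y
  have fm: "case_prod f \<in> borel_measurable (P \<Otimes>\<^sub>M nu)"
    unfolding f_def using nu(2) by measurable
  have 1: "(\<integral>\<^sup>+y. f x y \<partial>nu) = emeasure nu {y. y \<le> z - g x}" if "x \<in> space P" for x
  proof -
    have "(\<integral>\<^sup>+y. f x y \<partial>nu) = (\<integral>\<^sup>+y. indicator {y. y \<le> z - g x} y \<partial>nu)"
      using that by (intro nn_integral_cong) (auto simp: f_def space_pair_measure sp indicator_def)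
    also have "\<dots> = emeasure nu {y. y \<le> z - g x}"
      using nu(2) le_borel by (intro nn_integral_indicator) auto
    finally show ?thesis .
  qed
  have 2: "(\<integral>\<^sup>+x. f x y \<partial>P) = emeasure P {x\<in>space P. g x \<le> z - y}" for y
  proof -
    have "(\<integral>\<^sup>+x. f x y \<partial>P) = (\<integral>\<^sup>+x. indicator {x\<in>space P. g x \<le> z - y} x \<partial>P)"
      by (intro nn_integral_cong) (auto simp: f_def space_pair_measure sp indicator_def)
    also have "\<dots> = emeasure P {x\<in>space P. g x \<le> z - y}"
      by (intro nn_integral_indicator sets_le) (rule g)
    finally show ?thesis .
  qed
  have "(\<integral>\<^sup>+x. emeasure nu {y. y \<le> z - g x} \<partial>P) = (\<integral>\<^sup>+x. (\<integral>\<^sup>+y. f x y \<partial>nu) \<partial>P)"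
    using 1 by (intro nn_integral_cong) auto
  also have "\<dots> = (\<integral>\<^sup>+y. (\<integral>\<^sup>+x. f x y \<partial>P) \<partial>nu)"
    using Fubini'[OF fm] by simp
  also have "\<dots> = (\<integral>\<^sup>+y. emeasure P {x\<in>space P. g x \<le> z - y} \<partial>nu)"
    using 2 by simp
  finally show ?thesis .
qed

lemma psi_Suc:
  assumes mu: "prob_space mu" "sets mu = sets borel"
  shows "psi mu (Suc k) z = (\<integral>\<^sup>+xs. C mu (z - (\<Sum>i<k. xs i)) \<partial>PiM {..<k} (\<lambda>_. mu))"
proof -
  interpret prob_space mu by fact
  interpret product_sigma_finite "\<lambda>_. mu" by unfold_locales
  have sp: "space mu = UNIV" using mu(2) sets_eq_imp_space_eq by fastforce
  let ?M = "\<lambda>_::nat. mu"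
  let ?S = "{xs \<in> space (PiM (insert k {..<k}) ?M). (\<Sum>i\<in>insert k {..<k}. xs i) \<le> z}"
  have Sm: "?S \<in> sets (PiM (insert k {..<k}) ?M)"
  proof -
    have "(\<lambda>xs. \<Sum>i\<in>insert k {..<k}. xs i) \<in> borel_measurable (PiM (insert k {..<k}) ?M)"
      by (rule meas_sum_PiM[OF mu(2)]) simp
    from sets_le[OF this, of z] show ?thesis .
  qed
  have "psi mu (Suc k) z = emeasure (PiM (insert k {..<k}) ?M) ?S"
    by (simp add: psi_def lessThan_Suc)
  also have "\<dots> = (\<integral>\<^sup>+xs. indicator ?S xs \<partial>PiM (insert k {..<k}) ?M)"
    using Sm by simp
  also have "\<dots> = (\<integral>\<^sup>+x. (\<integral>\<^sup>+y. indicator ?S (x(k:=y)) \<partial>mu) \<partial>PiM {..<k} ?M)"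
    by (rule product_nn_integral_insert[OF _ _ borel_measurable_indicator[OF Sm]]) auto
  also have "\<dots> = (\<integral>\<^sup>+x. (\<integral>\<^sup>+y. indicator {y. y \<le> z - (\<Sum>i<k. x i)} y \<partial>mu) \<partial>PiM {..<k} ?M)"
  proof (intro nn_integral_cong)
    fix x y assume x: "x \<in> space (PiM {..<k} ?M)"
    have "x(k:=y) \<in> space (PiM (insert k {..<k}) ?M)"
      using x by (auto simp: space_PiM PiE_def extensional_def sp)
    moreover have "(\<Sum>i\<in>insert k {..<k}. (x(k:=y)) i) = (\<Sum>i<k. x i) + y"
      by (simp add: add.commute)
    ultimately show "indicator ?S (x(k:=y)) = (indicator {y. y \<le> z - (\<Sum>i<k. x i)} y :: ennreal)"
      by (auto simp: indicator_def)
  qed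
  also have "\<dots> = (\<integral>\<^sup>+xs. C mu (z - (\<Sum>i<k. xs i)) \<partial>PiM {..<k} (\<lambda>_. mu))"
    using mu(2) le_borel by (simp add: C_def)
  finally show ?thesis .
qed

lemma psi_Suc2:
  assumes mu: "prob_space mu" "sets mu = sets borel"
  shows "psi mu (Suc k) z = (\<integral>\<^sup>+y. psi mu k (z - y) \<partial>mu)"
  apply (subst psi_Suc[OF mu])
  unfolding C_def psi_def
  by (rule swap[OF prob_space_PiM mu meas_sum_PiM[OF mu(2)]]) (auto simp: mu)

lemma psi_le1: "prob_space mu \<Longrightarrow> psi mu k z \<le> 1"
  unfolding psi_def by (rule prob_space.emeasure_le_1[OF prob_space_PiM]) auto

lemma psi_0: "prob_space mu \<Longrightarrow> psi mu 0 z = (if 0 \<le> z then 1 else 0)"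
proof -
  assume "prob_space mu"
  then interpret P: prob_space "PiM ({}::nat set) (\<lambda>_. mu)" by (rule prob_space_PiM)
  show ?thesis unfolding psi_def by (cases "0 \<le> z") (auto simp: P.emeasure_space_1)
qed

lemma C_le1: "prob_space mu \<Longrightarrow> C mu z \<le> 1"
  unfolding C_def by (rule prob_space.emeasure_le_1)

lemma psi_dom:
  assumes mu: "prob_space mu" "sets mu = sets borel"
    and nu: "prob_space nu" "sets nu = sets borel"
    and d: "\<And>z. C mu z \<le> C nu z"
  shows "psi mu k z \<le> psi nu k z"
proof (induction k arbitrary: z)
  case 0
  then show ?case using mu nu by (simp add: psi_0)
next
  case (Suc k)
  have "psi mu (Suc k) z = (\<integral>\<^sup>+xs. C mu (z - (\<Sum>i<k. xs i)) \<partial>PiM {..<k} (\<lambda>_. mu))"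
    by (rule psi_Suc[OF mu])
  also have "\<dots> \<le> (\<integral>\<^sup>+xs. C nu (z - (\<Sum>i<k. xs i)) \<partial>PiM {..<k} (\<lambda>_. mu))"
    by (intro nn_integral_mono d)
  also have "\<dots> = (\<integral>\<^sup>+y. psi mu k (z - y) \<partial>nu)"
    unfolding C_def psi_def
    by (rule swap[OF prob_space_PiM nu meas_sum_PiM[OF mu(2)]]) (auto simp: mu)
  also have "\<dots> \<le> (\<integral>\<^sup>+y. psi nu k (z - y) \<partial>nu)"
    by (intro nn_integral_mono Suc.IH)
  also have "\<dots> = psi nu (Suc k) z"
    by (rule psi_Suc2[OF nu, symmetric])
  finally show ?case .
qed

lemma psi_Suc_le:
  assumes mu: "prob_space mu" "sets mu = sets borel" and nn: "\<And>z. z < 0 \<Longrightarrow> C mu z = 0"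
  shows "psi mu (Suc k) z \<le> psi mu k z"
proof -
  let ?P = "PiM {..<k} (\<lambda>_. mu)"
  have Sm: "{xs \<in> space ?P. (\<Sum>i<k. xs i) \<le> z} \<in> sets ?P"
    by (rule sets_le, rule meas_sum_PiM[OF mu(2)]) simp
  have "psi mu (Suc k) z = (\<integral>\<^sup>+xs. C mu (z - (\<Sum>i<k. xs i)) \<partial>?P)"
    by (rule psi_Suc[OF mu])
  also have "\<dots> \<le> (\<integral>\<^sup>+xs. indicator {xs \<in> space ?P. (\<Sum>i<k. xs i) \<le> z} xs \<partial>?P)"
  proof (intro nn_integral_mono)
    fix xs assume "xs \<in> space ?P"
    then show "C mu (z - (\<Sum>i<k. xs i)) \<le> indicator {xs \<in> space ?P. (\<Sum>i<k. xs i) \<le> z} xs"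
      using C_le1[OF mu(1)] nn[of "z - (\<Sum>i<k. xs i)"] by (auto simp: indicator_def)
  qed
  also have "\<dots> = psi mu k z"
    using Sm by (simp add: psi_def)
  finally show ?thesis .
qed

lemma psi_antimono:
  assumes mu: "prob_space mu" "sets mu = sets borel" and nn: "\<And>z. z < 0 \<Longrightarrow> C mu z = 0"
    and "i \<le> j"
  shows "psi mu j z \<le> psi mu i z"
  using assms(4)
proof (induction j rule: dec_induct)
  case (step n)
  then show ?case using psi_Suc_le[OF mu nn, of n z] by (meson order_trans)
qed simp

lemma rsum_meas:
  assumes Kd: "sets Kd = (UNIV :: nat set set)" and mu: "sets mu = sets (borel :: real measure)"
  shows "(\<lambda>(k, xs). \<Sum>i<k. xs i) \<in> borel_measurable (Kd \<Otimes>\<^sub>M PiM UNIV (\<lambda>_. mu))"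
proof -
  let ?Q = "Kd \<Otimes>\<^sub>M PiM UNIV (\<lambda>_. mu)"
  have eq: "(\<lambda>(k, xs). \<Sum>i<k. xs i) = (\<lambda>p. (\<lambda>i p. \<Sum>j<i. (snd p) j) (fst p) p)" by auto
  have "measurable ?Q Kd = measurable ?Q (count_space UNIV)"
    by (rule measurable_cong_sets) (auto simp: Kd)
  then have f: "fst \<in> measurable ?Q (count_space UNIV)" using measurable_fst by blast
  show ?thesis unfolding eq
  proof (rule measurable_compose_countable[OF _ f])
    fix i :: nat
    show "(\<lambda>p. \<Sum>j<i. (snd p) j) \<in> borel_measurable ?Q"
      using measurable_compose[OF measurable_snd meas_sum_PiM[OF mu, of "{..<i}" UNIV]] by simp
  qed
qed

lemma rsum_C:
  assumes Kd: "prob_space Kd" "sets Kd = (UNIV :: nat set set)"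
    and mu: "prob_space mu" "sets mu = sets borel"
  shows "C (rsum Kd mu) z = (\<integral>\<^sup>+k. psi mu k z \<partial>Kd)"
proof -
  let ?Pi = "PiM UNIV (\<lambda>_::nat. mu)"
  let ?Q = "Kd \<Otimes>\<^sub>M ?Pi"
  let ?f = "\<lambda>(k, xs). \<Sum>i<k. xs i"
  interpret mu: prob_space mu by fact
  interpret PP: product_prob_space "\<lambda>_::nat. mu" UNIV by unfold_locales
  have SF: "sigma_finite_measure ?Pi" by unfold_locales
  have sp: "space mu = UNIV" using mu(2) sets_eq_imp_space_eq by fastforce
  have spK: "space Kd = UNIV" using Kd(2) sets_eq_imp_space_eq[of Kd "count_space UNIV"] by auto
  have fm: "?f \<in> borel_measurable ?Q" by (rule rsum_meas[OF Kd(2) mu(2)])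
  have "C (rsum Kd mu) z = emeasure ?Q (?f -` {x. x \<le> z} \<inter> space ?Q)"
    unfolding C_def rsum_def by (rule emeasure_distr[OF fm le_borel])
  also have "\<dots> = (\<integral>\<^sup>+k. emeasure ?Pi (Pair k -` (?f -` {x. x \<le> z} \<inter> space ?Q)) \<partial>Kd)"
    by (rule sigma_finite_measure.emeasure_pair_measure_alt[OF SF]) (rule measurable_sets[OF fm le_borel])
  also have "\<dots> = (\<integral>\<^sup>+k. psi mu k z \<partial>Kd)"
  proof (intro nn_integral_cong)
    fix k assume "k \<in> space Kd"
    let ?X = "{xs \<in> space (PiM {..<k} (\<lambda>_. mu)). (\<Sum>i<k. xs i) \<le> z}"
    have Xm: "?X \<in> sets (PiM {..<k} (\<lambda>_. mu))"
      by (rule sets_le, rule meas_sum_PiM[OF mu(2)]) simp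
    have "Pair k -` (?f -` {x. x \<le> z} \<inter> space ?Q) = prod_emb UNIV (\<lambda>_. mu) {..<k} ?X"
      by (auto simp: prod_emb_def space_pair_measure spK space_PiM sp PiE_iff)
    then show "emeasure ?Pi (Pair k -` (?f -` {x. x \<le> z} \<inter> space ?Q)) = psi mu k z"
      using PP.emeasure_PiM_emb'[of "{..<k}" ?X] Xm by (simp add: psi_def)
  qed
  finally show ?thesis .
qed

definition good :: "real measure \<Rightarrow> bool" where
  "good mu \<longleftrightarrow> prob_space mu \<and> sets mu = sets borel \<and> (\<forall>z<0. C mu z = 0)"

lemma max2_meas_real:
  assumes "sets X = sets (borel :: real measure)"
  shows "(\<lambda>(x, y). max x y) \<in> measurable (X \<Otimes>\<^sub>M X) X"
proof -
  have "measurable (X \<Otimes>\<^sub>M X) X = measurable (borel \<Otimes>\<^sub>M borel) (borel :: real measure)"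
    by (rule measurable_cong_sets) (auto simp: assms intro!: sets_pair_measure_cong)
  moreover have "(\<lambda>(x, y). max x y) \<in> measurable (borel \<Otimes>\<^sub>M borel) (borel :: real measure)"
    by measurable
  ultimately show ?thesis by simp
qed

lemma max2_C:
  assumes X: "prob_space X" "sets X = sets borel"
  shows "C (max2 X) z = C X z * C X z"
proof -
  interpret X: prob_space X by fact
  have sp: "space X = UNIV" using X(2) sets_eq_imp_space_eq by fastforce
  have "C (max2 X) z = emeasure (X \<Otimes>\<^sub>M X) ((\<lambda>(x, y). max x y) -` {x. x \<le> z} \<inter> space (X \<Otimes>\<^sub>M X))"
    unfolding C_def max2_def
    by (rule emeasure_distr[OF max2_meas_real[OF X(2)]]) (simp add: X(2) le_borel)
  also have "(\<lambda>(x, y). max x y) -` {x. x \<le> z} \<inter> space (X \<Otimes>\<^sub>M X) = {x. x \<le> z} \<times> {x. x \<le> z}"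
    by (auto simp: space_pair_measure sp)
  also have "emeasure (X \<Otimes>\<^sub>M X) \<dots> = C X z * C X z"
    unfolding C_def by (rule X.emeasure_pair_measure_Times) (auto simp: X(2) le_borel)
  finally show ?thesis .
qed

lemma good_max2: "good X \<Longrightarrow> good (max2 X)"
  unfolding good_def
proof (elim conjE, intro conjI allI impI)
  assume X: "prob_space X" "sets X = sets borel" "\<forall>z<0. C X z = 0"
  show "prob_space (max2 X)" unfolding max2_def
    by (rule prob_space.prob_space_distr[OF prob_space_pair[OF X(1) X(1)] max2_meas_real[OF X(2)]])
  show "sets (max2 X) = sets borel" by (simp add: max2_def X(2))
  fix z :: real assume "z < 0" then show "C (max2 X) z = 0"
    using X by (simp add: max2_C)
qed

lemma good_rsum:
  assumes Kd: "prob_space Kd" "sets Kd = (UNIV :: nat set set)" and mu: "good mu"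
  shows "good (rsum Kd mu)"
proof -
  have mu': "prob_space mu" "sets mu = sets borel" "\<And>z. z < 0 \<Longrightarrow> C mu z = 0"
    using mu by (auto simp: good_def)
  have P: "prob_space (PiM UNIV (\<lambda>_::nat. mu))" by (rule prob_space_PiM) (use mu' in auto)
  have "prob_space (rsum Kd mu)" unfolding rsum_def
    by (rule prob_space.prob_space_distr[OF prob_space_pair[OF Kd(1) P] rsum_meas[OF Kd(2) mu'(2)]])
  moreover have "sets (rsum Kd mu) = sets borel" by (simp add: rsum_def)
  moreover have "C (rsum Kd mu) z = 0" if z: "z < 0" for z
  proof -
    have "C (rsum Kd mu) z = (\<integral>\<^sup>+k. psi mu k z \<partial>Kd)" by (rule rsum_C[OF Kd mu'(1,2)])
    also have "\<dots> = (\<integral>\<^sup>+k. 0 \<partial>Kd)"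
    proof (intro nn_integral_cong)
      fix k
      have "psi mu k z \<le> psi mu 0 z" by (rule psi_antimono[OF mu']) auto
      then show "psi mu k z = 0" using z psi_0[OF mu'(1), of z] by simp
    qed
    finally show ?thesis by simp
  qed
  ultimately show ?thesis by (simp add: good_def)
qed

lemma nat_pair_meas:
  assumes "sets G = (UNIV :: nat set set)"
  shows "measurable (G \<Otimes>\<^sub>M G) N = measurable (count_space UNIV) N"
proof (rule measurable_cong_sets)
  have "sets (G \<Otimes>\<^sub>M G) = sets (count_space (UNIV::nat set) \<Otimes>\<^sub>M count_space (UNIV::nat set))"
    by (rule sets_pair_measure_cong) (simp_all add: assms)
  also have "\<dots> = sets (count_space UNIV)"
    by (subst pair_measure_countable) auto
  finally show "sets (G \<Otimes>\<^sub>M G) = sets (count_space (UNIV :: (nat \<times> nat) set))" by simp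
qed simp

lemma nat_meas:
  assumes "sets G = (UNIV :: nat set set)"
  shows "measurable G N = measurable (count_space UNIV) N"
  by (rule measurable_cong_sets) (simp_all add: assms)

lemma max2_nat:
  assumes G: "prob_space G" "sets G = (UNIV :: nat set set)"
  shows "prob_space (max2 G)" "sets (max2 G) = UNIV"
    "(\<integral>\<^sup>+k. f k \<partial>max2 G) = (\<integral>\<^sup>+p. f (max (fst p) (snd p)) \<partial>(G \<Otimes>\<^sub>M G))"
proof -
  have sp: "space G = UNIV" using G(2) sets_eq_imp_space_eq[of G "count_space UNIV"] by auto
  have m: "(\<lambda>(x, y). max x y) \<in> measurable (G \<Otimes>\<^sub>M G) G"
    by (simp add: nat_pair_meas[OF G(2)] sp)
  show "prob_space (max2 G)" unfolding max2_def
    by (rule prob_space.prob_space_distr[OF prob_space_pair[OF G(1) G(1)] m])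
  show "sets (max2 G) = UNIV" by (simp add: max2_def G(2))
  have "(\<integral>\<^sup>+k. f k \<partial>max2 G) = (\<integral>\<^sup>+p. f ((\<lambda>(x, y). max x y) p) \<partial>(G \<Otimes>\<^sub>M G))"
    unfolding max2_def by (rule nn_integral_distr[OF m]) (simp add: nat_meas[OF G(2)])
  then show "(\<integral>\<^sup>+k. f k \<partial>max2 G) = (\<integral>\<^sup>+p. f (max (fst p) (snd p)) \<partial>(G \<Otimes>\<^sub>M G))"
    by (simp add: case_prod_beta)
qed

lemma prod_int:
  assumes G: "prob_space G" "sets G = (UNIV :: nat set set)"
  shows "(\<integral>\<^sup>+p. f (fst p) * f (snd p) \<partial>(G \<Otimes>\<^sub>M G)) = (\<integral>\<^sup>+k. f k \<partial>G) * (\<integral>\<^sup>+k. f k \<partial>G)"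
proof -
  interpret G: prob_space G by fact
  have fm: "f \<in> borel_measurable G" by (simp add: nat_meas[OF G(2)])
  have "(\<integral>\<^sup>+p. f (fst p) * f (snd p) \<partial>(G \<Otimes>\<^sub>M G)) = (\<integral>\<^sup>+x. \<integral>\<^sup>+y. f x * f y \<partial>G \<partial>G)"
    by (rule G.nn_integral_fst[symmetric, where f = "\<lambda>p. f (fst p) * f (snd p)", simplified])
       (simp add: nat_pair_meas[OF G(2)])
  also have "\<dots> = (\<integral>\<^sup>+x. f x * (\<integral>\<^sup>+y. f y \<partial>G) \<partial>G)"
    by (intro nn_integral_cong nn_integral_cmult fm)
  also have "\<dots> = (\<integral>\<^sup>+k. f k \<partial>G) * (\<integral>\<^sup>+k. f k \<partial>G)"
    by (rule nn_integral_multc[OF fm])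
  finally show ?thesis .
qed

lemma key:
  assumes G: "prob_space G" "sets G = (UNIV :: nat set set)"
    and M: "good M" and R: "good R" and d: "\<And>z. C M z \<le> C R z"
  shows "C (max2 (rsum G M)) z \<le> C (rsum (max2 G) R) z"
proof -
  have M': "prob_space M" "sets M = sets borel" "\<And>z. z < 0 \<Longrightarrow> C M z = 0"
    using M by (auto simp: good_def)
  have R': "prob_space R" "sets R = sets borel"
    using R by (auto simp: good_def)
  have S: "prob_space (rsum G M)" "sets (rsum G M) = sets borel"
    using good_rsum[OF G M] by (auto simp: good_def)
  let ?A = "\<integral>\<^sup>+k. psi M k z \<partial>G"
  have "C (max2 (rsum G M)) z = ?A * ?A"
    using max2_C[OF S] rsum_C[OF G M'(1,2)] by simp
  also have "\<dots> = (\<integral>\<^sup>+p. psi M (fst p) z * psi M (snd p) z \<partial>(G \<Otimes>\<^sub>M G))"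
    by (rule prod_int[OF G, symmetric])
  also have "\<dots> \<le> (\<integral>\<^sup>+p. psi M (max (fst p) (snd p)) z \<partial>(G \<Otimes>\<^sub>M G))"
  proof (intro nn_integral_mono)
    fix p :: "nat \<times> nat"
    obtain i j where p: "p = (i, j)" by (cases p)
    show "psi M (fst p) z * psi M (snd p) z \<le> psi M (max (fst p) (snd p)) z"
    proof (cases "i \<le> j")
      case True
      have "psi M i z * psi M j z \<le> 1 * psi M j z"
        by (intro mult_right_mono psi_le1[OF M'(1)]) simp
      then show ?thesis using True p by (simp add: max_def)
    next
      case False
      have "psi M i z * psi M j z \<le> psi M i z * 1"
        by (intro mult_left_mono psi_le1[OF M'(1)]) simp
      then show ?thesis using False p by (simp add: max_def)
    qed
  qed
  also have "\<dots> = (\<integral>\<^sup>+k. psi M k z \<partial>max2 G)"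
    by (rule max2_nat(3)[OF G, symmetric])
  also have "\<dots> \<le> (\<integral>\<^sup>+k. psi R k z \<partial>max2 G)"
    by (intro nn_integral_mono psi_dom[OF M'(1,2) R'] d)
  also have "\<dots> = C (rsum (max2 G) R) z"
    by (rule rsum_C[OF max2_nat(1,2)[OF G] R', symmetric])
  finally show ?thesis .
qed

lemma good_geomT0: "good (geomT0 p)"
proof -
  have m: "real \<in> measurable (geom1 p) borel" by (simp add: geom1_def)
  have "prob_space (geomT0 p)" unfolding geomT0_def geom1_def
    by (rule prob_space.prob_space_distr[OF measure_pmf.prob_space_axioms]) simp
  moreover have "sets (geomT0 p) = sets borel" by (simp add: geomT0_def)
  moreover have "C (geomT0 p) z = 0" if "z < 0" for z
  proof -
    have "C (geomT0 p) z = emeasure (geom1 p) (real -` {x. x \<le> z} \<inter> space (geom1 p))"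
      unfolding C_def geomT0_def by (rule emeasure_distr[OF m le_borel])
    also have "real -` {x. x \<le> z} \<inter> space (geom1 p) = {}" using that by auto
    finally show ?thesis by simp
  qed
  ultimately show ?thesis by (simp add: good_def)
qed

lemma good_expT0: assumes "0 < p" shows "good (expT0 p)"
proof -
  have "prob_space (expT0 p)" unfolding expT0_def by (rule prob_space_exponential_density[OF assms])
  moreover have "sets (expT0 p) = sets borel" by (simp add: expT0_def)
  moreover have "C (expT0 p) z = 0" if "z < 0" for z
  proof -
    have "C (expT0 p) z = (\<integral>\<^sup>+x. ennreal (exponential_density p x) * indicator {x. x \<le> z} x \<partial>lborel)"
      unfolding C_def expT0_def by (rule emeasure_density) (auto simp: le_borel)
    also have "\<dots> = (\<integral>\<^sup>+(x::real). 0 \<partial>lborel)"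
      using that by (intro nn_integral_cong) (auto simp: indicator_def exponential_density_def)
    finally show ?thesis by simp
  qed
  ultimately show ?thesis by (simp add: good_def)
qed

theorem lemma11:
  fixes pgen pswap :: real and T0 :: "real measure"
  assumes "0 < pgen" and "pgen < 1" and "0 < pswap" and "pswap \<le> 1"
    and "T0 = geomT0 pgen \<or> T0 = expT0 pgen"
  shows "\<forall>n::nat. \<forall>z::real.
           measure (Mlaw pswap T0 n) {x. z < x} \<ge> measure (Rlaw pswap T0 n) {x. z < x}"
proof -
  let ?G = "geom1 pswap"
  have G: "prob_space ?G" "sets ?G = UNIV"
    by (simp_all add: geom1_def measure_pmf.prob_space_axioms)
  have T0: "good T0" using assms(5) good_geomT0 good_expT0[OF assms(1)] by auto
  have GT: "good (Tlaw pswap T0 n)" for n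
    by (induction n) (simp_all add: T0 good_rsum[OF G] good_max2)
  have GM: "good (Mlaw pswap T0 n)" for n
    by (simp add: Mlaw_def GT good_max2)
  have GR: "good (Rlaw pswap T0 n)" for n
    by (induction n) (simp_all add: T0 good_max2 good_rsum[OF max2_nat(1,2)[OF G]])
  have D: "C (Mlaw pswap T0 n) z \<le> C (Rlaw pswap T0 n) z" for n z
  proof (induction n arbitrary: z)
    case 0
    then show ?case by (simp add: Mlaw_def)
  next
    case (Suc n)
    have "C (Mlaw pswap T0 (Suc n)) z = C (max2 (rsum ?G (Mlaw pswap T0 n))) z"
      by (simp add: Mlaw_def)
    also have "\<dots> \<le> C (rsum (max2 ?G) (Rlaw pswap T0 n)) z"
      by (rule key[OF G GM GR Suc.IH])
    finally show ?case by simp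
  qed
  show ?thesis
  proof (intro allI)
    fix n :: nat and z :: real
    let ?M = "Mlaw pswap T0 n" and ?R = "Rlaw pswap T0 n"
    have cm: "measure X {x. z < x} = 1 - enn2real (C X z)" if "good X" for X
    proof -
      have X: "prob_space X" "sets X = sets borel" using that by (auto simp: good_def)
      interpret X: prob_space X by fact
      have sp: "space X = UNIV" using X(2) sets_eq_imp_space_eq by fastforce
      have "{x. z < x} = space X - {x. x \<le> z}" by (auto simp: sp)
      then have "measure X {x. z < x} = 1 - measure X {x. x \<le> z}"
        using X.prob_compl[of "{x. x \<le> z}"] X(2) le_borel by simp
      then show ?thesis by (simp add: C_def measure_def)
    qed
    have "enn2real (C ?M z) \<le> enn2real (C ?R z)"
      using D[of n z] C_le1[of ?R z] GR[of n] by (intro enn2real_mono) (auto simp: good_def intro: le_less_trans[OF _ ennreal_one_less_top])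
    then show "measure ?M {x. z < x} \<ge> measure ?R {x. z < x}"
      using cm[OF GM] cm[OF GR] by simp
  qed
qed

end
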